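(* $D(19,\{3,4\})\ge 34$; equivalently, every $\{K_3,K_4\}$-decomposition of $K_{19}$ has $\alpha\ge 11$.
   Context: A $\{K_3,K_4\}$-decomposition of $K_v$ is a collection of subgraphs, each isomorphic to $K_3$ or $K_4$, such that every edge of $K_v$ lies in exactly one of them. $\alpha$ and $\beta$ denote the numbers of copies of $K_3$ and $K_4$ in the decomposition (so $3\alpha+6\beta=\binom{v}{2}$). $D(v,\{3,4\})$ is the minimum of $\alpha+\beta$ over all such decompositions of $K_v$. *)

theory Defs
  imports Main
begin

text \<open>A subgraph isomorphic to K_3 (resp. K_4) of K_v is determined by its
vertex set, a 3-element (resp. 4-element) subset of {0..<v}.\<close>

definition K34_decomposition :: "nat \<Rightarrow> nat set set \<Rightarrow> bool" where
  "K34_decomposition v \<B> \<longleftrightarrow>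
     finite \<B> \<and>
     (\<forall>B\<in>\<B>. B \<subseteq> {0..<v} \<and> (card B = 3 \<or> card B = 4)) \<and>
     (\<forall>e. e \<subseteq> {0..<v} \<and> card e = 2 \<longrightarrow> (\<exists>!B. B \<in> \<B> \<and> e \<subseteq> B))"

definition num_K3 :: "nat set set \<Rightarrow> nat" where
  "num_K3 \<B> = card {B\<in>\<B>. card B = 3}"

definition num_K4 :: "nat set set \<Rightarrow> nat" where
  "num_K4 \<B> = card {B\<in>\<B>. card B = 4}"

end

theory Submission
  imports Defs
begin

lemma decomp_props:
  assumes "K34_decomposition v \<B>"
  shows "finite \<B>" "B\<in>\<B> \<Longrightarrow> B \<subseteq> {0..<v}" "B\<in>\<B> \<Longrightarrow> card B = 3 \<or> card B = 4"
proof -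
  have H: "finite \<B> \<and> (\<forall>B\<in>\<B>. B \<subseteq> {0..<v} \<and> (card B = 3 \<or> card B = 4))"
    using assms unfolding K34_decomposition_def by (elim conjE) (intro conjI)
  show "finite \<B>" by (rule H[THEN conjunct1])
  show "B\<in>\<B> \<Longrightarrow> B \<subseteq> {0..<v}" using H[THEN conjunct2] by blast
  show "B\<in>\<B> \<Longrightarrow> card B = 3 \<or> card B = 4" using H[THEN conjunct2] by blast
qed

lemma unique_block:
  assumes D: "K34_decomposition v \<B>" and "x < v" "y < v" "x \<noteq> y"
  shows "\<exists>!B. B\<in>\<B> \<and> x\<in>B \<and> y\<in>B"
proof -
  have a: "{x,y} \<subseteq> {0..<v}" using assms by simp
  have b: "card {x,y} = 2" using assms by simp
  have H: "\<forall>e. e \<subseteq> {0..<v} \<and> card e = 2 \<longrightarrow> (\<exists>!B. B \<in> \<B> \<and> e \<subseteq> B)"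
    using D unfolding K34_decomposition_def by (elim conjE)
  have "\<exists>!B. B \<in> \<B> \<and> {x,y} \<subseteq> B" by (rule H[rule_format, OF conjI[OF a b]])
  then show ?thesis by simp
qed
lemma pair_count:
  assumes D: "K34_decomposition v \<B>"
  shows "(\<Sum>x\<in>{0..<v}. \<Sum>y\<in>{0..<v}-{x}. g x y) = (\<Sum>B\<in>\<B>. \<Sum>x\<in>B. \<Sum>y\<in>B-{x}. (g x y::int))"
proof -
  let ?V = "{0..<v}"
  have fin: "finite \<B>" and sub: "\<And>B. B\<in>\<B> \<Longrightarrow> B \<subseteq> ?V" using decomp_props[OF D] by auto
  have finB: "\<And>B. B\<in>\<B> \<Longrightarrow> finite B" using sub finite_subset by blast
  have "(\<Sum>B\<in>\<B>. \<Sum>x\<in>B. \<Sum>y\<in>B-{x}. g x y) = (\<Sum>B\<in>\<B>. \<Sum>x\<in>?V. if x\<in>B then (\<Sum>y\<in>B-{x}. g x y) else 0)"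
  proof (rule sum.cong[OF refl])
    fix B assume "B\<in>\<B>"
    then have "B = ?V \<inter> B" using sub by blast
    then show "(\<Sum>x\<in>B. \<Sum>y\<in>B-{x}. g x y) = (\<Sum>x\<in>?V. if x\<in>B then (\<Sum>y\<in>B-{x}. g x y) else 0)"
      using sum.inter_restrict[of ?V "\<lambda>x. \<Sum>y\<in>B-{x}. g x y" B] by simp
  qed
  also have "\<dots> = (\<Sum>x\<in>?V. \<Sum>B\<in>\<B>. if x\<in>B then (\<Sum>y\<in>B-{x}. g x y) else 0)" by (rule sum.swap)
  also have "\<dots> = (\<Sum>x\<in>?V. \<Sum>B\<in>{B\<in>\<B>. x\<in>B}. \<Sum>y\<in>B-{x}. g x y)"
    by (simp add: sum.inter_filter[OF fin])
  also have "\<dots> = (\<Sum>x\<in>?V. \<Sum>y\<in>?V-{x}. g x y)"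
  proof (rule sum.cong[OF refl])
    fix x assume x: "x\<in>?V"
    have U: "?V - {x} = (\<Union>B\<in>{B\<in>\<B>. x\<in>B}. B-{x})"
    proof
      show "?V - {x} \<subseteq> (\<Union>B\<in>{B\<in>\<B>. x\<in>B}. B-{x})"
      proof
        fix y assume y: "y \<in> ?V - {x}"
        then obtain B where "B\<in>\<B>" "x\<in>B" "y\<in>B" using unique_block[OF D, of x y] x by auto
        then show "y \<in> (\<Union>B\<in>{B\<in>\<B>. x\<in>B}. B-{x})" using y by blast
      qed
      show "(\<Union>B\<in>{B\<in>\<B>. x\<in>B}. B-{x}) \<subseteq> ?V - {x}" using sub by blast
    qed
    have disj: "\<forall>B\<in>{B\<in>\<B>. x\<in>B}. \<forall>B'\<in>{B\<in>\<B>. x\<in>B}. B \<noteq> B' \<longrightarrow> (B-{x}) \<inter> (B'-{x}) = {}"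
    proof (intro ballI impI)
      fix B B' assume B: "B\<in>{B\<in>\<B>. x\<in>B}" and B': "B'\<in>{B\<in>\<B>. x\<in>B}" and ne: "B \<noteq> B'"
      show "(B-{x}) \<inter> (B'-{x}) = {}"
      proof (rule ccontr)
        assume "(B-{x}) \<inter> (B'-{x}) \<noteq> {}"
        then obtain y where y: "y\<in>B" "y\<in>B'" "y\<noteq>x" by blast
        have "B \<subseteq> {0..<v}" using B sub by blast
        then have "y < v" using y(1) by (simp add: subset_iff)
        then have "\<exists>!B. B\<in>\<B> \<and> x\<in>B \<and> y\<in>B" using unique_block[OF D, of x y] x y by auto
        then show False using B B' y ne by blast
      qed
    qed
    have "(\<Sum>y\<in>?V-{x}. g x y) = (\<Sum>B\<in>{B\<in>\<B>. x\<in>B}. \<Sum>y\<in>B-{x}. g x y)"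
    proof -
      have "(\<Sum>y\<in>(\<Union>B\<in>{B\<in>\<B>. x\<in>B}. B-{x}). g x y) = (\<Sum>B\<in>{B\<in>\<B>. x\<in>B}. \<Sum>y\<in>B-{x}. g x y)"
        by (rule sum.UNION_disjoint[OF _ _ disj]) (simp_all add: fin finB)
      then show ?thesis using U by simp
    qed
    then show "(\<Sum>B\<in>{B\<in>\<B>. x\<in>B}. \<Sum>y\<in>B-{x}. g x y) = (\<Sum>y\<in>?V-{x}. g x y)" by (rule sym)
  qed
  finally show ?thesis by (rule sym)
qed

lemma quad_inner:
  fixes \<tau> :: "nat \<Rightarrow> int"
  assumes "finite A" "\<And>x. \<tau> x = 0 \<or> \<tau> x = 1" "x \<in> A"
  shows "(\<Sum>y\<in>A-{x}. 1 - 2*\<tau> x - 2*\<tau> y + 6*\<tau> x*\<tau> y)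
     = (int (card A) - 1 - 2*(\<Sum>x\<in>A. \<tau> x)) + (6*(\<Sum>x\<in>A. \<tau> x) - 2*int (card A) - 2) * \<tau> x"
proof -
  have e: "(\<Sum>y\<in>A-{x}. \<tau> y) = (\<Sum>x\<in>A. \<tau> x) - \<tau> x" using assms by (simp add: sum_diff1)
  have c: "int (card (A - {x})) = int (card A) - 1" using assms
  proof -
    have "card A > 0" using assms card_gt_0_iff by blast
    then show ?thesis using assms(3) by (simp add: of_nat_diff)
  qed
  have "(\<Sum>y\<in>A-{x}. 1 - 2*\<tau> x - 2*\<tau> y + 6*\<tau> x*\<tau> y) = (\<Sum>y\<in>A-{x}. (1 - 2*\<tau> x) + (6*\<tau> x - 2)*\<tau> y)"
    by (rule sum.cong[OF refl]) (simp add: algebra_simps)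
  also have "\<dots> = int (card (A-{x})) * (1 - 2*\<tau> x) + (6*\<tau> x - 2) * (\<Sum>y\<in>A-{x}. \<tau> y)"
    by (simp add: sum.distrib sum_distrib_left)
  finally have L: "(\<Sum>y\<in>A-{x}. 1 - 2*\<tau> x - 2*\<tau> y + 6*\<tau> x*\<tau> y) = (int (card A) - 1) * (1 - 2*\<tau> x) + (6*\<tau> x - 2) * ((\<Sum>x\<in>A. \<tau> x) - \<tau> x)"
    unfolding e c .
  show ?thesis using assms(2)[of x] L by (elim disjE) (simp_all add: algebra_simps)
qed

lemma quad_sum:
  fixes \<tau> :: "nat \<Rightarrow> int"
  assumes "finite A" "\<And>x. \<tau> x = 0 \<or> \<tau> x = 1"
  shows "(\<Sum>x\<in>A. \<Sum>y\<in>A-{x}. 1 - 2*\<tau> x - 2*\<tau> y + 6*\<tau> x*\<tau> y)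
     = int (card A) * (int (card A) - 1 - 2*(\<Sum>x\<in>A. \<tau> x)) + (6*(\<Sum>x\<in>A. \<tau> x) - 2*int (card A) - 2) * (\<Sum>x\<in>A. \<tau> x)"
proof -
  have "(\<Sum>x\<in>A. \<Sum>y\<in>A-{x}. 1 - 2*\<tau> x - 2*\<tau> y + 6*\<tau> x*\<tau> y)
     = (\<Sum>x\<in>A. (int (card A) - 1 - 2*(\<Sum>x\<in>A. \<tau> x)) + (6*(\<Sum>x\<in>A. \<tau> x) - 2*int (card A) - 2) * \<tau> x)"
    by (rule sum.cong[OF refl]) (rule quad_inner[OF assms])
  also have "\<dots> = int (card A) * (int (card A) - 1 - 2*(\<Sum>x\<in>A. \<tau> x)) + (6*(\<Sum>x\<in>A. \<tau> x) - 2*int (card A) - 2) * (\<Sum>x\<in>A. \<tau> x)"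
    by (simp add: sum.distrib sum_distrib_left)
  finally show ?thesis .
qed

lemma main_identity:
  assumes D: "K34_decomposition v \<B>" and tau: "\<And>x. \<tau> x = 0 \<or> \<tau> x = 1"
  shows "int v * (int v - 1 - 2*(\<Sum>x\<in>{0..<v}. \<tau> x)) + (6*(\<Sum>x\<in>{0..<v}. \<tau> x) - 2*int v - 2) * (\<Sum>x\<in>{0..<v}. \<tau> x)
   = (\<Sum>B\<in>\<B>. int (card B) * (int (card B) - 1 - 2*(\<Sum>x\<in>B. \<tau> x)) + (6*(\<Sum>x\<in>B. \<tau> x) - 2*int (card B) - 2) * (\<Sum>x\<in>B. \<tau> x))"
proof -
  have finB: "\<And>B. B\<in>\<B> \<Longrightarrow> finite B" using decomp_props(2)[OF D] finite_subset by blast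
  have "int v * (int v - 1 - 2*(\<Sum>x\<in>{0..<v}. \<tau> x)) + (6*(\<Sum>x\<in>{0..<v}. \<tau> x) - 2*int v - 2) * (\<Sum>x\<in>{0..<v}. \<tau> x)
    = (\<Sum>x\<in>{0..<v}. \<Sum>y\<in>{0..<v}-{x}. 1 - 2*\<tau> x - 2*\<tau> y + 6*\<tau> x*\<tau> y)"
    using quad_sum[of "{0..<v}" \<tau>, OF _ tau] by simp
  also have "\<dots> = (\<Sum>B\<in>\<B>. \<Sum>x\<in>B. \<Sum>y\<in>B-{x}. 1 - 2*\<tau> x - 2*\<tau> y + 6*\<tau> x*\<tau> y)"
    by (rule pair_count[OF D])
  also have "\<dots> = (\<Sum>B\<in>\<B>. int (card B) * (int (card B) - 1 - 2*(\<Sum>x\<in>B. \<tau> x)) + (6*(\<Sum>x\<in>B. \<tau> x) - 2*int (card B) - 2) * (\<Sum>x\<in>B. \<tau> x))"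
    by (rule sum.cong[OF refl], rule quad_sum[OF finB tau])
  finally show ?thesis .
qed


lemma delta_double:
  assumes "finite A"
  shows "(\<Sum>a\<in>A. \<Sum>b\<in>A-{a}. if a = y then f b else 0) = (if y \<in> A then (\<Sum>b\<in>A-{y}. f b) else (0::int))"
proof -
  have "(\<Sum>a\<in>A. \<Sum>b\<in>A-{a}. if a = y then f b else 0) = (\<Sum>a\<in>A. if a = y then (\<Sum>b\<in>A-{a}. f b) else 0)"
  proof (rule sum.cong[OF refl])
    fix a show "(\<Sum>b\<in>A-{a}. if a = y then f b else 0) = (if a = y then (\<Sum>b\<in>A-{a}. f b) else 0)"
      by (cases "a = y") simp_all
  qed
  also have "\<dots> = (if y \<in> A then (\<Sum>b\<in>A-{y}. f b) else 0)"
    by (rule sum.delta[OF assms])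
  finally show ?thesis .
qed

lemma split_sum:
  assumes D: "K34_decomposition v \<B>"
  shows "(\<Sum>B\<in>\<B>. h B) = (\<Sum>B\<in>{B\<in>\<B>. card B = 3}. h B) + (\<Sum>B\<in>{B\<in>\<B>. card B = 4}. (h B :: int))"
proof -
  have fin: "finite \<B>" by (rule decomp_props(1)[OF D])
  have u: "\<B> = {B\<in>\<B>. card B = 3} \<union> {B\<in>\<B>. card B = 4}" using decomp_props(3)[OF D] by blast
  have "(\<Sum>B\<in>\<B>. h B) = (\<Sum>B\<in>{B\<in>\<B>. card B = 3} \<union> {B\<in>\<B>. card B = 4}. h B)"
    by (rule arg_cong[where f="sum h"], rule u)
  also have "\<dots> = (\<Sum>B\<in>{B\<in>\<B>. card B = 3}. h B) + (\<Sum>B\<in>{B\<in>\<B>. card B = 4}. h B)"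
    by (rule sum.union_disjoint) (use fin in auto)
  finally show ?thesis .
qed

lemma quad_nonneg: "0 \<le> 4*(3-2*k) + (6*k-10)*(k::int)"
proof -
  have e: "4*(3-2*k) + (6*k-10)*k = 6*((k-1)*(k-2))" by (simp add: algebra_simps)
  have "0 \<le> (k-1)*(k-2)" by (cases "k \<le> 1") (simp_all add: zero_le_mult_iff)
  then show ?thesis unfolding e by simp
qed

theorem mainTheorem20:
  assumes "K34_decomposition 19 \<B>"
  shows "num_K3 \<B> + num_K4 \<B> \<ge> 34"
proof -
  let ?V = "{0..<19::nat}"
  define B3 where "B3 = {B\<in>\<B>. card B = 3}"
  define B4 where "B4 = {B\<in>\<B>. card B = 4}"
  have fin: "finite \<B>" by (rule decomp_props(1)[OF assms])
  have sub: "\<And>B. B\<in>\<B> \<Longrightarrow> B \<subseteq> ?V" by (rule decomp_props(2)[OF assms])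
  have finB: "\<And>B. B\<in>\<B> \<Longrightarrow> finite B" using sub finite_subset by blast
  have fin34: "finite B3" "finite B4" using fin by (simp_all add: B3_def B4_def)
  have nk: "num_K3 \<B> = card B3" "num_K4 \<B> = card B4" by (simp_all add: num_K3_def num_K4_def B3_def B4_def)
  have split: "\<And>h. (\<Sum>B\<in>\<B>. h B) = (\<Sum>B\<in>B3. h B) + (\<Sum>B\<in>B4. (h B::int))"
    unfolding B3_def B4_def by (rule split_sum[OF assms])
  have B3in: "\<And>B. B \<in> B3 \<Longrightarrow> B \<in> \<B> \<and> card B = 3" by (simp add: B3_def)
  have B4in: "\<And>B. B \<in> B4 \<Longrightarrow> B \<in> \<B> \<and> card B = 4" by (simp add: B4_def)

  have s1: "int (card B3) + 2 * int (card B4) = 57"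
  proof -
    have "(342::int) = (\<Sum>B\<in>\<B>. int (card B) * (int (card B) - 1))"
      using main_identity[OF assms, of "\<lambda>_. 0::int"] by simp
    also have "\<dots> = (\<Sum>B\<in>B3. int (card B) * (int (card B) - 1)) + (\<Sum>B\<in>B4. int (card B) * (int (card B) - 1))"
      by (rule split)
    also have "(\<Sum>B\<in>B3. int (card B) * (int (card B) - 1)) = (\<Sum>B\<in>B3. 6)"
      by (rule sum.cong[OF refl]) (simp add: B3in)
    also have "(\<Sum>B\<in>B4. int (card B) * (int (card B) - 1)) = (\<Sum>B\<in>B4. 12)"
      by (rule sum.cong[OF refl]) (simp add: B4in)
    finally show ?thesis by simp
  qed
  define r3 where "r3 x = card {B\<in>B3. x\<in>B}" for x
  define r4 where "r4 x = card {B\<in>B4. x\<in>B}" for x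
  have s2: "2 * r3 x + 3 * r4 x = 18" if xV: "x \<in> ?V" for x
  proof -
    have L: "(\<Sum>a\<in>?V. \<Sum>b\<in>?V-{a}. if a = x then 1 else 0) = (18::int)"
      using xV by (simp add: sum_distrib_left[symmetric])
    have R: "(\<Sum>a\<in>B. \<Sum>b\<in>B-{a}. if a = x then 1 else 0) = (if x \<in> B then int (card B) - 1 else (0::int))"
      if "B \<in> \<B>" for B
    proof -
      have "finite B" using finB that by blast
      moreover have "x \<in> B \<Longrightarrow> int (card B - Suc 0) = int (card B) - 1"
      proof -
        assume "x \<in> B"
        then have "0 < card B" using \<open>finite B\<close> card_gt_0_iff by blast
        then show ?thesis by linarith
      qed
      ultimately show ?thesis by (simp add: sum_distrib_left[symmetric] of_nat_diff)
    qed
    have "(18::int) = (\<Sum>B\<in>\<B>. if x \<in> B then int (card B) - 1 else 0)"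
      using pair_count[OF assms, of "\<lambda>a b. if a = x then 1 else 0"] L R by simp
    also have "\<dots> = (\<Sum>B\<in>B3. if x \<in> B then int (card B) - 1 else 0) + (\<Sum>B\<in>B4. if x \<in> B then int (card B) - 1 else 0)"
      by (rule split)
    also have "(\<Sum>B\<in>B3. if x \<in> B then int (card B) - 1 else 0) = (\<Sum>B\<in>B3. if x \<in> B then 2 else 0)"
      by (rule sum.cong[OF refl]) (simp add: B3in)
    also have "(\<Sum>B\<in>B4. if x \<in> B then int (card B) - 1 else 0) = (\<Sum>B\<in>B4. if x \<in> B then 3 else 0)"
      by (rule sum.cong[OF refl]) (simp add: B4in)
    also have "(\<Sum>B\<in>B3. if x \<in> B then (2::int) else 0) = 2 * int (r3 x)"
      unfolding r3_def using sum.inter_filter[OF fin34(1), of "\<lambda>_. (2::int)" "\<lambda>B. x \<in> B"] by simp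
    also have "(\<Sum>B\<in>B4. if x \<in> B then (3::int) else 0) = 3 * int (r4 x)"
      unfolding r4_def using sum.inter_filter[OF fin34(2), of "\<lambda>_. (3::int)" "\<lambda>B. x \<in> B"] by simp
    finally show ?thesis by linarith
  qed
  have s3: "(\<Sum>x\<in>?V. r3 x) = 3 * card B3"
  proof -
    have "(\<Sum>x\<in>?V. r3 x) = (\<Sum>x\<in>?V. \<Sum>B\<in>B3. if x \<in> B then 1 else 0)"
      unfolding r3_def by (rule sum.cong[OF refl]) (simp add: sum.inter_filter[OF fin34(1), symmetric])
    also have "\<dots> = (\<Sum>B\<in>B3. \<Sum>x\<in>?V. if x \<in> B then 1 else 0)" by (rule sum.swap)
    also have "\<dots> = (\<Sum>B\<in>B3. 3)"
    proof (rule sum.cong[OF refl])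
      fix B assume B: "B \<in> B3"
      have "{x\<in>?V. x \<in> B} = B" using sub B3in[OF B] by blast
      then have "(\<Sum>x\<in>?V. if x \<in> B then 1 else 0) = card B"
        using sum.inter_filter[of ?V "\<lambda>_. (1::nat)" "\<lambda>x. x \<in> B"] by simp
      then show "(\<Sum>x\<in>?V. if x \<in> B then 1 else 0) = (3::nat)" using B3in[OF B] by simp
    qed
    finally show ?thesis by simp
  qed
  define T where "T = {x\<in>?V. 0 < r3 x}"
  have finT: "finite T" by (simp add: T_def)
  have TV: "T \<subseteq> ?V" by (auto simp: T_def)
  have r3T: "3 \<le> r3 x" if "x \<in> T" for x
  proof -
    have "2 * r3 x + 3 * r4 x = 18" "0 < r3 x" using s2 that by (auto simp: T_def)
    then show ?thesis by presburger
  qed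
  have a_ge_t: "card T \<le> card B3"
  proof -
    have "3 * card T = (\<Sum>x\<in>T. 3)" by simp
    also have "\<dots> \<le> (\<Sum>x\<in>T. r3 x)" by (rule sum_mono) (rule r3T)
    also have "\<dots> \<le> (\<Sum>x\<in>?V. r3 x)" by (rule sum_mono2) (use TV in auto)
    finally show ?thesis using s3 by simp
  qed
  have triT: "B \<subseteq> T" if B: "B \<in> B3" for B
  proof
    fix x assume x: "x \<in> B"
    have "B \<in> {B\<in>B3. x\<in>B}" using B x by simp
    moreover have "finite {B\<in>B3. x\<in>B}" using fin34(1) by simp
    ultimately have "0 < r3 x" unfolding r3_def by (metis card_gt_0_iff empty_iff)
    moreover have "x \<in> ?V" using sub B3in[OF B] x by blast
    ultimately show "x \<in> T" by (simp add: T_def)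
  qed
  define \<tau> where "\<tau> x = (if x \<in> T then 1 else 0::int)" for x
  have tau01: "\<And>x. \<tau> x = 0 \<or> \<tau> x = 1" by (simp add: \<tau>_def)
  have tauV: "(\<Sum>x\<in>?V. \<tau> x) = int (card T)"
  proof -
    have "(\<Sum>x\<in>?V. \<tau> x) = (\<Sum>x\<in>{x\<in>?V. x \<in> T}. 1)"
      unfolding \<tau>_def by (rule sum.inter_filter[symmetric]) simp
    also have "{x\<in>?V. x \<in> T} = T" using TV by blast
    finally show ?thesis by simp
  qed
  have tau3: "(\<Sum>x\<in>B. \<tau> x) = 3" if B: "B \<in> B3" for B
  proof -
    have "(\<Sum>x\<in>B. \<tau> x) = (\<Sum>x\<in>B. 1)" 
      by (rule sum.cong[OF refl]) (use triT[OF B] in \<open>auto simp: \<tau>_def\<close>)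
    then show ?thesis using B3in[OF B] by simp
  qed
  have s4: "7 \<le> card T" if y: "y \<in> T" for y
  proof -
    have yV: "y \<in> ?V" using y TV by blast
    have L: "(\<Sum>a\<in>?V. \<Sum>b\<in>?V-{a}. if a = y then \<tau> b else 0) = int (card T) - 1"
    proof -
      have "(\<Sum>a\<in>?V. \<Sum>b\<in>?V-{a}. if a = y then \<tau> b else 0) = (\<Sum>b\<in>?V-{y}. \<tau> b)"
        using delta_double[of ?V y \<tau>] yV by simp
      also have "\<dots> = (\<Sum>x\<in>?V. \<tau> x) - \<tau> y" using yV by (simp only: sum_diff1 finite_atLeastLessThan if_True)
      also have "\<tau> y = 1" using y by (simp only: \<tau>_def if_True)
      finally show ?thesis using tauV by (simp only:)
    qed
    have R: "(\<Sum>a\<in>B. \<Sum>b\<in>B-{a}. if a = y then \<tau> b else 0) = (if y \<in> B then (\<Sum>b\<in>B-{y}. \<tau> b) else 0)"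
      if "B \<in> \<B>" for B
    proof -
      have "finite B" using finB that by blast
      then show ?thesis by (rule delta_double)
    qed
    have "int (card T) - 1 = (\<Sum>B\<in>\<B>. if y \<in> B then (\<Sum>b\<in>B-{y}. \<tau> b) else 0)"
      using pair_count[OF assms, of "\<lambda>a b. if a = y then \<tau> b else 0"] L R by simp
    also have "\<dots> = (\<Sum>B\<in>B3. if y \<in> B then (\<Sum>b\<in>B-{y}. \<tau> b) else 0) + (\<Sum>B\<in>B4. if y \<in> B then (\<Sum>b\<in>B-{y}. \<tau> b) else 0)"
      by (rule split)
    also have "(\<Sum>B\<in>B3. if y \<in> B then (\<Sum>b\<in>B-{y}. \<tau> b) else 0) = (\<Sum>B\<in>B3. if y \<in> B then 2 else 0)"
    proof (rule sum.cong[OF refl])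
      fix B assume B: "B \<in> B3"
      have "finite B" using finB B3in[OF B] by blast
      then show "(if y \<in> B then (\<Sum>b\<in>B-{y}. \<tau> b) else 0) = (if y \<in> B then 2 else 0)"
        using tau3[OF B] triT[OF B] by (auto simp: sum_diff1 \<tau>_def)
    qed
    also have "(\<Sum>B\<in>B3. if y \<in> B then (2::int) else 0) = 2 * int (r3 y)"
      unfolding r3_def using sum.inter_filter[OF fin34(1), of "\<lambda>_. (2::int)" "\<lambda>B. y \<in> B"] by simp
    finally have "int (card T) - 1 = 2 * int (r3 y) + (\<Sum>B\<in>B4. if y \<in> B then (\<Sum>b\<in>B-{y}. \<tau> b) else 0)" .
    moreover have "0 \<le> (\<Sum>B\<in>B4. if y \<in> B then (\<Sum>b\<in>B-{y}. \<tau> b) else 0)"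
      by (rule sum_nonneg) (auto intro!: sum_nonneg simp: \<tau>_def split: if_split_asm)
    moreover have "3 \<le> r3 y" by (rule r3T[OF y])
    ultimately show ?thesis by linarith
  qed
  have s5: "18 * int (card B3) \<le> 6 * int (card T)^2 - 78 * int (card T) + 342"
  proof -
    have "6 * int (card T)^2 - 78 * int (card T) + 342
       = (\<Sum>B\<in>\<B>. int (card B) * (int (card B) - 1 - 2*(\<Sum>x\<in>B. \<tau> x)) + (6*(\<Sum>x\<in>B. \<tau> x) - 2*int (card B) - 2) * (\<Sum>x\<in>B. \<tau> x))"
    proof -
      have M: "int 19 * (int 19 - 1 - 2*int (card T)) + (6*int (card T) - 2*int 19 - 2) * int (card T)
        = (\<Sum>B\<in>\<B>. int (card B) * (int (card B) - 1 - 2*(\<Sum>x\<in>B. \<tau> x)) + (6*(\<Sum>x\<in>B. \<tau> x) - 2*int (card B) - 2) * (\<Sum>x\<in>B. \<tau> x))"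
        using main_identity[where \<tau>=\<tau>, OF assms tau01] unfolding tauV .
      have "6 * int (card T)^2 - 78 * int (card T) + 342 = int 19 * (int 19 - 1 - 2*int (card T)) + (6*int (card T) - 2*int 19 - 2) * int (card T)"
        by (simp add: algebra_simps power2_eq_square)
      then show ?thesis using M by (rule trans)
    qed
    also have "\<dots> = (\<Sum>B\<in>B3. int (card B) * (int (card B) - 1 - 2*(\<Sum>x\<in>B. \<tau> x)) + (6*(\<Sum>x\<in>B. \<tau> x) - 2*int (card B) - 2) * (\<Sum>x\<in>B. \<tau> x))
       + (\<Sum>B\<in>B4. int (card B) * (int (card B) - 1 - 2*(\<Sum>x\<in>B. \<tau> x)) + (6*(\<Sum>x\<in>B. \<tau> x) - 2*int (card B) - 2) * (\<Sum>x\<in>B. \<tau> x))"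
      by (rule split)
    also have "(\<Sum>B\<in>B3. int (card B) * (int (card B) - 1 - 2*(\<Sum>x\<in>B. \<tau> x)) + (6*(\<Sum>x\<in>B. \<tau> x) - 2*int (card B) - 2) * (\<Sum>x\<in>B. \<tau> x)) = (\<Sum>B\<in>B3. 18)"
      by (rule sum.cong[OF refl]) (simp add: B3in tau3)
    also have "(\<Sum>B\<in>B4. int (card B) * (int (card B) - 1 - 2*(\<Sum>x\<in>B. \<tau> x)) + (6*(\<Sum>x\<in>B. \<tau> x) - 2*int (card B) - 2) * (\<Sum>x\<in>B. \<tau> x))
       = (\<Sum>B\<in>B4. 4*(3-2*(\<Sum>x\<in>B. \<tau> x)) + (6*(\<Sum>x\<in>B. \<tau> x)-10)*(\<Sum>x\<in>B. \<tau> x))"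
      by (rule sum.cong[OF refl]) (simp add: B4in)
    finally have E: "6 * int (card T)^2 - 78 * int (card T) + 342 = 18 * int (card B3) + (\<Sum>B\<in>B4. 4*(3-2*(\<Sum>x\<in>B. \<tau> x)) + (6*(\<Sum>x\<in>B. \<tau> x)-10)*(\<Sum>x\<in>B. \<tau> x))"
      by simp
    have "0 \<le> (\<Sum>B\<in>B4. 4*(3-2*(\<Sum>x\<in>B. \<tau> x)) + (6*(\<Sum>x\<in>B. \<tau> x)-10)*(\<Sum>x\<in>B. \<tau> x))"
      by (rule sum_nonneg) (rule quad_nonneg)
    then show ?thesis using E by linarith
  qed
  have "card B3 \<noteq> 0" using s1 by presburger
  then obtain B where B: "B \<in> B3" by (metis card.empty ex_in_conv)
  have "card B = 3" using B3in[OF B] by simp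
  then obtain y where "y \<in> B" by (metis card.empty ex_in_conv zero_neq_numeral)
  then have "y \<in> T" using triT[OF B] by blast
  then have t7: "7 \<le> card T" by (rule s4)
  have "11 \<le> card T"
  proof (rule ccontr)
    assume "\<not> 11 \<le> card T"
    then have "card T = 7 \<or> card T = 8 \<or> card T = 9 \<or> card T = 10" using t7 by linarith
    then show False using s5 a_ge_t by (elim disjE) (simp_all add: power2_eq_square)
  qed
  then have "11 \<le> card B3" using a_ge_t by linarith
  then show ?thesis unfolding nk using s1 by linarith
qed

end
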